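(* Let $M=(X,rk)$ be a matroid on a finite ground set $X$ with rank $r=rk(X)$, and let $i$ be a nonnegative integer. Then $d_1(M)>r-i$ if and only if \[[x^i]T_M(x,1)=\binom{|X|-i-1}{r-i}.\]
   Context: $T_M(x,y)=\sum_{A\subseteq X}(x-1)^{r-rk(A)}(y-1)^{|A|-rk(A)}$ is the Tutte polynomial of $M$, and $[x^i]f(x)$ denotes the coefficient of $x^i$. A circuit of $M$ is a set $C\subseteq X$ with $rk(C\setminus\{e\})=|C|-1=rk(C)$ for all $e\in C$. $d_1(M)$ is the minimum size of a circuit of $M$. *)

theory Defs
  imports "HOL-Computational_Algebra.Polynomial" "HOL-Library.Extended_Nat"
begin

definition matroid_rank :: "'a set \<Rightarrow> ('a set \<Rightarrow> nat) \<Rightarrow> bool" where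
  "matroid_rank X rk \<longleftrightarrow> finite X
     \<and> (\<forall>A. A \<subseteq> X \<longrightarrow> rk A \<le> card A)
     \<and> (\<forall>A B. A \<subseteq> B \<and> B \<subseteq> X \<longrightarrow> rk A \<le> rk B)
     \<and> (\<forall>A B. A \<subseteq> X \<and> B \<subseteq> X \<longrightarrow> rk (A \<union> B) + rk (A \<inter> B) \<le> rk A + rk B)"

text \<open>Tutte polynomial T_M(x,y), viewed as a polynomial in x for a fixed value of y.\<close>
definition tutte_poly_x :: "'a set \<Rightarrow> ('a set \<Rightarrow> nat) \<Rightarrow> real \<Rightarrow> real poly" where
  "tutte_poly_x X rk y = (\<Sum>A\<in>Pow X.
      [:-1, 1:] ^ (rk X - rk A) * [: (y - 1) ^ (card A - rk A) :])"

text \<open>Circuits (sizes computed in the integers, so the empty set is not a circuit).\<close>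
definition circuit :: "'a set \<Rightarrow> ('a set \<Rightarrow> nat) \<Rightarrow> 'a set \<Rightarrow> bool" where
  "circuit X rk C \<longleftrightarrow> C \<subseteq> X \<and>
     int (rk C) = int (card C) - 1 \<and>
     (\<forall>e\<in>C. int (rk (C - {e})) = int (card C) - 1)"

text \<open>d_1(M): minimum size of a circuit; \<infinity> if M has no circuit.\<close>
definition d1 :: "'a set \<Rightarrow> ('a set \<Rightarrow> nat) \<Rightarrow> enat" where
  "d1 X rk = Inf {enat (card C) | C. circuit X rk C}"

definition int_binom :: "int \<Rightarrow> int \<Rightarrow> real" where
  "int_binom a b = (if b < 0 then 0 else (of_int a :: real) gchoose (nat b))"

end

theory Submission
  imports Defs
begin


lemma mr_finite: "matroid_rank X rk \<Longrightarrow> finite X" by (simp add: matroid_rank_def)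
lemma mr_card: "matroid_rank X rk \<Longrightarrow> A \<subseteq> X \<Longrightarrow> rk A \<le> card A" by (simp add: matroid_rank_def)
lemma mr_mono: "matroid_rank X rk \<Longrightarrow> A \<subseteq> B \<Longrightarrow> B \<subseteq> X \<Longrightarrow> rk A \<le> rk B"
  unfolding matroid_rank_def by blast
lemma mr_sub: "matroid_rank X rk \<Longrightarrow> A \<subseteq> X \<Longrightarrow> B \<subseteq> X \<Longrightarrow> rk (A \<union> B) + rk (A \<inter> B) \<le> rk A + rk B"
  unfolding matroid_rank_def by blast
lemma mr_empty: "matroid_rank X rk \<Longrightarrow> rk {} = 0"
  using mr_card[of X rk "{}"] by simp

lemma mr_single: "matroid_rank X rk \<Longrightarrow> e \<in> X \<Longrightarrow> rk {e} \<le> 1"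
  using mr_card[of X rk "{e}"] by simp

lemma mr_insert: assumes "matroid_rank X rk" "A \<subseteq> X" "e \<in> X"
  shows "rk (insert e A) \<le> rk A + 1"
proof -
  have "rk (A \<union> {e}) + rk (A \<inter> {e}) \<le> rk A + rk {e}" using mr_sub[OF assms(1) assms(2), of "{e}"] assms by auto
  then show ?thesis using mr_single[OF assms(1,3)] by simp
qed

lemma mr_restrict: "matroid_rank X rk \<Longrightarrow> Y \<subseteq> X \<Longrightarrow> matroid_rank Y rk"
  unfolding matroid_rank_def by (meson finite_subset order_trans)

lemma indep_subset: assumes m: "matroid_rank X rk" and "A \<subseteq> X" "rk A = card A" "B \<subseteq> A"
  shows "rk B = card B"
proof -
  have f: "finite A" using assms mr_finite finite_subset by blast
  have "rk (B \<union> (A - B)) + rk (B \<inter> (A - B)) \<le> rk B + rk (A - B)"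
    using mr_sub[OF m, of B "A - B"] assms by auto
  moreover have "B \<union> (A - B) = A" "B \<inter> (A - B) = {}" using assms by auto
  moreover have "card A = card B + card (A - B)"
  proof -
    have fB: "finite B" using f assms(4) finite_subset by blast
    have "card (A - B) = card A - card B" using card_Diff_subset[OF fB assms(4)] .
    moreover have "card B \<le> card A" using card_mono[OF f assms(4)] .
    ultimately show ?thesis by simp
  qed
  moreover have "rk (A - B) \<le> card (A - B)" using mr_card[OF m, of "A - B"] assms by auto
  moreover have "rk B \<le> card B" using mr_card[OF m, of B] assms by auto
  ultimately show ?thesis using mr_empty[OF m] assms by simp
qed

lemma circuit_card: "circuit X rk C \<Longrightarrow> card C = rk C + 1"
  unfolding circuit_def by simp

lemma dep_circuit: assumes m: "matroid_rank X rk"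
  shows "S \<subseteq> X \<Longrightarrow> rk S < card S \<Longrightarrow> \<exists>C \<subseteq> S. circuit X rk C"
proof (induction "card S" arbitrary: S rule: less_induct)
  case less
  have fS: "finite S" using less.prems m mr_finite finite_subset by blast
  show ?case
  proof (cases "\<exists>f\<in>S. rk (S - {f}) < card (S - {f})")
    case True
    then obtain f where f: "f \<in> S" "rk (S - {f}) < card (S - {f})" by blast
    have "card (S - {f}) < card S" using f fS by (simp add: card_gt_0_iff)
    then obtain C where "C \<subseteq> S - {f}" "circuit X rk C" using less.hyps[of "S - {f}"] less.prems f by blast
    then show ?thesis by blast
  next
    case False
    have ne: "S \<noteq> {}" using less.prems by auto
    then obtain f where f: "f \<in> S" by blast
    have all: "\<forall>g\<in>S. rk (S - {g}) = card S - 1"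
    proof
      fix g assume g: "g \<in> S"
      have "rk (S - {g}) \<le> card (S - {g})" using mr_card[OF m, of "S - {g}"] less.prems by auto
      then show "rk (S - {g}) = card S - 1" using False g fS by auto
    qed
    have "rk (S - {f}) \<le> rk S" using mr_mono[OF m, of "S - {f}" S] less.prems by auto
    then have "rk S = card S - 1" using all f less.prems by auto
    moreover have "card S \<ge> 1" using ne fS by (simp add: Suc_leI card_gt_0_iff)
    ultimately have "circuit X rk S" unfolding circuit_def using all less.prems by auto
    then show ?thesis by blast
  qed
qed

lemma Inf_enat_less: "(enat k < Inf (S :: enat set)) \<longleftrightarrow> (\<forall>x\<in>S. enat k < x)"
proof -
  have "enat k < Inf S \<longleftrightarrow> enat (Suc k) \<le> Inf S" by (simp add: Suc_ile_eq)
  also have "\<dots> \<longleftrightarrow> (\<forall>x\<in>S. enat (Suc k) \<le> x)" by (simp add: le_Inf_iff)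
  also have "\<dots> \<longleftrightarrow> (\<forall>x\<in>S. enat k < x)" by (simp add: Suc_ile_eq)
  finally show ?thesis .
qed



lemma tutte_split:
  assumes "finite X'" "e \<notin> X'"
  shows "tutte_poly_x (insert e X') rk y =
    (\<Sum>A\<in>Pow X'. [:-1,1:]^(rk (insert e X') - rk A) * [:(y-1)^(card A - rk A):]) +
    (\<Sum>A\<in>Pow X'. [:-1,1:]^(rk (insert e X') - rk (insert e A)) * [:(y-1)^(card (insert e A) - rk (insert e A)):])"
proof -
  have d: "Pow X' \<inter> insert e ` Pow X' = {}" using assms(2) by auto
  have inj: "inj_on (insert e) (Pow X')" using assms(2) unfolding inj_on_def
    by (metis PowD insert_absorb insert_ident subsetD)
  have fin: "finite (Pow X')" "finite (insert e ` Pow X')" using assms by auto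
  define f where "f = (\<lambda>A. [:-1,1:]^(rk (insert e X') - rk A) * [:(y-1)^(card A - rk A):])"
  have "tutte_poly_x (insert e X') rk y = sum f (Pow X' \<union> insert e ` Pow X')"
    unfolding tutte_poly_x_def Pow_insert f_def ..
  also have "\<dots> = sum f (Pow X') + sum f (insert e ` Pow X')" by (rule sum.union_disjoint[OF fin d])
  also have "sum f (insert e ` Pow X') = sum (f \<circ> insert e) (Pow X')" by (rule sum.reindex[OF inj])
  finally show ?thesis unfolding f_def comp_def .
qed

definition Bn :: "nat \<Rightarrow> nat \<Rightarrow> nat \<Rightarrow> real" where
  "Bn n r i = int_binom (int n - int i - 1) (int r - int i)"

lemma Bn_gt: "i > r \<Longrightarrow> Bn n r i = 0" by (simp add: Bn_def int_binom_def)
lemma Bn_eq: "Bn n r r = 1" by (simp add: Bn_def int_binom_def)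

lemma Bn_nat: "i \<le> r \<Longrightarrow> r \<le> n \<Longrightarrow> i < n \<Longrightarrow> Bn n r i = real ((n - i - 1) choose (r - i))"
proof -
  assume a: "i \<le> r" "r \<le> n" "i < n"
  have e: "int n - int i - 1 = int (n - i - 1)" "int r - int i = int (r - i)" using a by auto
  show ?thesis unfolding Bn_def int_binom_def e of_int_of_nat_eq nat_int binomial_gbinomial by simp
qed

lemma Bn_nonneg: "r \<le> n \<Longrightarrow> Bn n r i \<ge> 0"
proof -
  assume a: "r \<le> n"
  consider "i > r" | "i = r" | "i < r" by linarith
  then show ?thesis
  proof cases
    case 3 then show ?thesis using Bn_nat[of i r n] a by simp
  qed (auto simp: Bn_gt Bn_eq)
qed

lemma Bn_pos: "i \<le> r \<Longrightarrow> r < n \<Longrightarrow> Bn n r i > 0"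
proof -
  assume a: "i \<le> r" "r < n"
  show ?thesis
  proof (cases "i = r")
    case True then show ?thesis by (simp add: Bn_eq)
  next
    case False then show ?thesis using Bn_nat[of i r n] a by simp
  qed
qed

lemma Bn_pascal: assumes "n \<ge> 1" "r \<ge> 1"
  shows "Bn n r i = Bn (n - 1) r i + Bn (n - 1) (r - 1) i"
proof -
  consider "i > r" | "i = r" | "i < r" by linarith
  then show ?thesis
  proof cases
    case 1 then show ?thesis by (simp add: Bn_gt)
  next
    case 2 then show ?thesis using assms by (simp add: Bn_eq Bn_gt)
  next
    case 3
    define a :: real where "a = of_int (int n - int i - 2)"
    define k where "k = r - i - 1"
    have rk: "int r - int i = int (Suc k)" "int (r - 1) - int i = int k" using 3 k_def by auto
    have an: "of_int (int n - int i - 1) = a + 1" "of_int (int (n - 1) - int i - 1) = a"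
      using assms unfolding a_def by auto
    have e1: "Bn n r i = (a + 1) gchoose Suc k" unfolding Bn_def int_binom_def rk an
      by (simp del: of_nat_Suc)
    have e2: "Bn (n - 1) r i = a gchoose Suc k" unfolding Bn_def int_binom_def rk an
      by (simp del: of_nat_Suc)
    have e3: "Bn (n - 1) (r - 1) i = a gchoose k" unfolding Bn_def int_binom_def rk an
      by (simp del: of_nat_Suc)
    show ?thesis unfolding e1 e2 e3 by (simp add: gbinomial_Suc_Suc)
  qed
qed

definition condc :: "'a set \<Rightarrow> ('a set \<Rightarrow> nat) \<Rightarrow> nat \<Rightarrow> bool" where
  "condc X rk i \<longleftrightarrow> (\<forall>C. circuit X rk C \<longrightarrow> rk X - i < card C)"



lemma contr_matroid:
  assumes m: "matroid_rank (insert e X') rk" and e: "e \<notin> X'" "rk {e} = 1"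
  shows "matroid_rank X' (\<lambda>A. rk (insert e A) - 1)"
proof -
  have fin: "finite X'" using mr_finite[OF m] by simp
  have ge: "rk (insert e A) \<ge> 1" if "A \<subseteq> X'" for A
    using mr_mono[OF m, of "{e}" "insert e A"] that e by auto
  have c1: "rk (insert e A) - 1 \<le> card A" if "A \<subseteq> X'" for A
  proof -
    have "rk (insert e A) \<le> card (insert e A)" using mr_card[OF m, of "insert e A"] that by auto
    moreover have "card (insert e A) = card A + 1" using that e fin finite_subset
      by (metis Suc_eq_plus1 card_insert_disjoint subsetD)
    ultimately show ?thesis by simp
  qed
  have c2: "rk (insert e A) - 1 \<le> rk (insert e B) - 1" if "A \<subseteq> B" "B \<subseteq> X'" for A B
  proof -
    have "rk (insert e A) \<le> rk (insert e B)" by (rule mr_mono[OF m]) (use that in auto)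
    then show ?thesis by simp
  qed
  have c3: "rk (insert e (A \<union> B)) - 1 + (rk (insert e (A \<inter> B)) - 1) \<le> rk (insert e A) - 1 + (rk (insert e B) - 1)"
    if "A \<subseteq> X'" "B \<subseteq> X'" for A B
  proof -
    have "rk (insert e A \<union> insert e B) + rk (insert e A \<inter> insert e B) \<le> rk (insert e A) + rk (insert e B)"
      using mr_sub[OF m, of "insert e A" "insert e B"] that by auto
    moreover have "insert e A \<union> insert e B = insert e (A \<union> B)" "insert e A \<inter> insert e B = insert e (A \<inter> B)" by auto
    moreover have "rk (insert e (A \<union> B)) \<ge> 1" "rk (insert e (A \<inter> B)) \<ge> 1" using ge[of "A \<union> B"] ge[of "A \<inter> B"] that by auto
    ultimately show ?thesis by simp
  qed
  show ?thesis unfolding matroid_rank_def using fin c1 c2 c3 by blast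
qed

lemma base_case: "tutte_poly_x {} rk y = 1"
  unfolding tutte_poly_x_def by simp

lemma circuit_sub: "circuit X' rk C \<Longrightarrow> X' \<subseteq> X \<Longrightarrow> circuit X rk C"
  unfolding circuit_def by blast

lemma circuit_res: "circuit X rk C \<Longrightarrow> C \<subseteq> X' \<Longrightarrow> circuit X' rk C"
  unfolding circuit_def by blast

lemma circuit_fin: "matroid_rank X rk \<Longrightarrow> circuit X rk C \<Longrightarrow> finite C"
  unfolding circuit_def using mr_finite finite_subset by blast

lemma main:
  "finite X \<Longrightarrow> matroid_rank X rk \<Longrightarrow>
    coeff (tutte_poly_x X rk 1) i \<le> Bn (card X) (rk X) i \<and>
    (coeff (tutte_poly_x X rk 1) i = Bn (card X) (rk X) i \<longleftrightarrow> condc X rk i)"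
proof (induction X arbitrary: rk i rule: finite_induct)
  case empty
  have r0: "rk {} = 0" using mr_empty[OF empty.prems] .
  have c: "condc {} rk i" unfolding condc_def circuit_def using r0 by auto
  show ?case
  proof (cases i)
    case 0 then show ?thesis using c r0 by (simp add: base_case Bn_def int_binom_def)
  next
    case (Suc j) then show ?thesis using c r0 by (simp add: base_case Bn_gt)
  qed
next
  case (insert e X')
  define X where "X = insert e X'"
  have m: "matroid_rank X rk" using insert.prems X_def by simp
  have mD: "matroid_rank X' rk" using mr_restrict[OF m] X_def by auto
  have eX: "e \<in> X" "X' \<subseteq> X" using X_def by auto
  have nX: "card X = Suc (card X')" using X_def insert.hyps by simp
  have rX1: "rk X' \<le> rk X" using mr_mono[OF m] eX by simp
  have rX2: "rk X \<le> rk X' + 1" using mr_insert[OF m eX(2) eX(1)] X_def by simp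
  have re: "rk {e} \<le> 1" using mr_single[OF m eX(1)] .
  have rXn: "rk X \<le> card X" using mr_card[OF m] by simp
  have rXn': "rk X' \<le> card X'" using mr_card[OF mD] by simp
  have cardins: "card (insert e A) = Suc (card A)" if "A \<subseteq> X'" for A
  proof -
    have "finite A" using that insert.hyps(1) finite_subset by blast
    moreover have "e \<notin> A" using that insert.hyps(2) by blast
    ultimately show ?thesis by simp
  qed
  have rkA: "rk A \<le> card A" if "A \<subseteq> X'" for A using mr_card[OF mD] that by simp
  have rkAX: "rk A \<le> rk X'" if "A \<subseteq> X'" for A using mr_mono[OF mD] that by simp
  have split: "tutte_poly_x X rk 1 =
    (\<Sum>A\<in>Pow X'. [:-1,1:]^(rk X - rk A) * [:(1-1)^(card A - rk A):]) +
    (\<Sum>A\<in>Pow X'. [:-1,1:]^(rk X - rk (insert e A)) * [:(1-1)^(card (insert e A) - rk (insert e A)):])"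
    unfolding X_def by (rule tutte_split[OF insert.hyps])
  have TD: "tutte_poly_x X' rk 1 = (\<Sum>A\<in>Pow X'. [:-1,1:]^(rk X' - rk A) * [:(1-1)^(card A - rk A):])"
    unfolding tutte_poly_x_def ..
  consider (loop) "rk {e} = 0" | (coloop) "rk {e} = 1" "rk X' < rk X" | (gen) "rk {e} = 1" "rk X' = rk X"
    using re rX1 by linarith
  then have goalX: "coeff (tutte_poly_x X rk 1) i \<le> Bn (card X) (rk X) i \<and>
    (coeff (tutte_poly_x X rk 1) i = Bn (card X) (rk X) i \<longleftrightarrow> condc X rk i)"
  proof cases
    case loop
    have hins: "rk (insert e A) = rk A" if "A \<subseteq> X'" for A
    proof -
      have "rk (A \<union> {e}) + rk (A \<inter> {e}) \<le> rk A + rk {e}" using mr_sub[OF m, of A "{e}"] that eX by auto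
      moreover have "A \<inter> {e} = {}" using that insert.hyps by auto
      moreover have "rk A \<le> rk (insert e A)" using mr_mono[OF m, of A "insert e A"] that eX by auto
      ultimately show ?thesis using loop mr_empty[OF m] by simp
    qed
    have rX: "rk X = rk X'" using hins[of X'] X_def by simp
    have T: "tutte_poly_x X rk 1 = tutte_poly_x X' rk 1"
    proof -
      have "(\<Sum>A\<in>Pow X'. [:-1,1:]^(rk X - rk (insert e A)) * [:(1-1::real)^(card (insert e A) - rk (insert e A)):]) = 0"
      proof (rule sum.neutral, intro ballI)
        fix A assume "A \<in> Pow X'"
        then have A: "A \<subseteq> X'" by simp
        have "card (insert e A) - rk (insert e A) > 0" using hins[OF A] cardins[OF A] rkA[OF A] by simp
        then show "[:-1,1:]^(rk X - rk (insert e A)) * [:(1-1::real)^(card (insert e A) - rk (insert e A)):] = 0" by simp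
      qed
      then show ?thesis using split TD rX by simp
    qed
    have circ: "circuit X rk {e}" unfolding circuit_def using loop eX mr_empty[OF m] by simp
    have cond: "condc X rk i \<longleftrightarrow> rk X \<le> i"
    proof
      assume "condc X rk i" then have "rk X - i < card {e}" using circ unfolding condc_def by blast
      then show "rk X \<le> i" by simp
    next
      assume "rk X \<le> i" then show "condc X rk i" unfolding condc_def using circuit_card[of X rk] by simp
    qed
    have IH: "coeff (tutte_poly_x X' rk 1) i \<le> Bn (card X') (rk X') i \<and>
      (coeff (tutte_poly_x X' rk 1) i = Bn (card X') (rk X') i \<longleftrightarrow> condc X' rk i)"
      using insert.IH[OF mD] .
    show ?thesis
    proof (cases "rk X \<le> i")
      case True
      have "condc X' rk i" unfolding condc_def using True rX circuit_card[of X' rk] by simp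
      moreover have "Bn (card X') (rk X') i = Bn (card X) (rk X) i"
        using True rX by (cases "rk X = i") (auto simp: Bn_eq Bn_gt)
      ultimately show ?thesis using IH T cond True by simp
    next
      case False
      have p: "Bn (card X) (rk X) i = Bn (card X') (rk X) i + Bn (card X') (rk X - 1) i"
        using Bn_pascal[of "card X" "rk X" i] nX False by simp
      have "Bn (card X') (rk X - 1) i > 0" using Bn_pos[of i "rk X - 1" "card X'"] False rX rXn' by simp
      then show ?thesis using IH T cond False rX p by simp
    qed
  next
    case coloop
    have rX: "rk X = rk X' + 1" using coloop rX2 by simp
    have hins: "rk (insert e A) = rk A + 1" if "A \<subseteq> X'" for A
    proof -
      have "rk (X' \<union> insert e A) + rk (X' \<inter> insert e A) \<le> rk X' + rk (insert e A)"
        using mr_sub[OF m, of X' "insert e A"] that eX by auto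
      moreover have "X' \<union> insert e A = X" "X' \<inter> insert e A = A" using that insert.hyps X_def by auto
      moreover have "rk (insert e A) \<le> rk A + 1" using mr_insert[OF m, of A e] that eX by auto
      ultimately show ?thesis using rX by simp
    qed
    define T' where "T' = tutte_poly_x X' rk 1"
    have T: "tutte_poly_x X rk 1 = pCons 0 T'"
    proof -
      have s1: "(\<Sum>A\<in>Pow X'. [:-1,1:]^(rk X - rk A) * [:(1-1::real)^(card A - rk A):])
          = [:-1,1:] * T'"
        unfolding T'_def TD sum_distrib_left
      proof (rule sum.cong[OF refl])
        fix A assume "A \<in> Pow X'"
        then have "rk A \<le> rk X'" using rkAX by simp
        then have "rk X - rk A = Suc (rk X' - rk A)" using rX by simp
        then show "[:-1,1:]^(rk X - rk A) * [:(1-1::real)^(card A - rk A):] =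
          [:-1,1:] * ([:-1,1:]^(rk X' - rk A) * [:(1-1::real)^(card A - rk A):])" by (simp add: mult.assoc)
      qed
      have s2: "(\<Sum>A\<in>Pow X'. [:-1,1:]^(rk X - rk (insert e A)) * [:(1-1::real)^(card (insert e A) - rk (insert e A)):])
          = T'"
        unfolding T'_def TD
      proof (rule sum.cong[OF refl])
        fix A assume A: "A \<in> Pow X'"
        then have "rk X - rk (insert e A) = rk X' - rk A" "card (insert e A) - rk (insert e A) = card A - rk A"
          using hins rX cardins by auto
        then show "[:-1,1:]^(rk X - rk (insert e A)) * [:(1-1::real)^(card (insert e A) - rk (insert e A)):] =
          [:-1,1:]^(rk X' - rk A) * [:(1-1::real)^(card A - rk A):]" by simp
      qed
      have "tutte_poly_x X rk 1 = [:-1,1:] * T' + T'" using split s1 s2 by simp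
      also have "\<dots> = pCons 0 T'" by (simp add: algebra_simps one_pCons)
      finally show ?thesis .
    qed
    have circ: "circuit X rk C \<longleftrightarrow> circuit X' rk C" for C
    proof
      assume c: "circuit X rk C"
      have "e \<notin> C"
      proof
        assume eC: "e \<in> C"
        have "C - {e} \<subseteq> X'" using c eX X_def unfolding circuit_def by auto
        then have "rk C = rk (C - {e}) + 1" using hins[of "C - {e}"] eC by (simp add: insert_absorb)
        moreover have "int (rk (C - {e})) = int (card C) - 1" using c eC unfolding circuit_def by blast
        moreover have "int (rk C) = int (card C) - 1" using c unfolding circuit_def by blast
        ultimately show False by simp
      qed
      moreover have "C \<subseteq> X" using c unfolding circuit_def by blast
      ultimately have "C \<subseteq> X'" using X_def by blast
      then show "circuit X' rk C" by (rule circuit_res[OF c])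
    next
      assume "circuit X' rk C" then show "circuit X rk C" using circuit_sub eX by blast
    qed
    show ?thesis
    proof (cases i)
      case 0
      have c0: "coeff (tutte_poly_x X rk 1) i = 0" using T 0 by simp
      show ?thesis
      proof (cases "rk X = card X")
        case True
        have "Bn (card X) (rk X) i = 0" using Bn_nat[of 0 "rk X" "card X"] True 0 nX by simp
        moreover have "condc X rk i" unfolding condc_def
        proof (intro allI impI)
          fix C assume c: "circuit X rk C"
          then have "C \<subseteq> X" unfolding circuit_def by simp
          then have "rk C = card C" using indep_subset[OF m, of X C] True by simp
          then show "rk X - i < card C" using circuit_card[OF c] by simp
        qed
        ultimately show ?thesis using c0 by simp
      next
        case False
        then have lt: "rk X < card X" using rXn by simp
        have "Bn (card X) (rk X) i > 0" using Bn_pos[of 0 "rk X" "card X"] lt 0 by simp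
        moreover have "\<not> condc X rk i"
        proof
          assume cd: "condc X rk i"
          have "rk X' < card X'" using lt rX nX by simp
          then obtain C where C: "C \<subseteq> X'" "circuit X' rk C" using dep_circuit[OF mD, of X'] by auto
          have "rk C \<le> rk X'" using mr_mono[OF mD] C by simp
          then have "card C \<le> rk X" using circuit_card[OF C(2)] rX by simp
          moreover have "circuit X rk C" using circ C by simp
          ultimately have "rk X - i < card C" "card C \<le> rk X" using cd unfolding condc_def by blast+
          then show False using 0 by simp
        qed
        ultimately show ?thesis using c0 by simp
      qed
    next
      case (Suc j)
      have c0: "coeff (tutte_poly_x X rk 1) i = coeff T' j" using T Suc by simp
      have IH: "coeff T' j \<le> Bn (card X') (rk X') j \<and>
        (coeff T' j = Bn (card X') (rk X') j \<longleftrightarrow> condc X' rk j)"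
        using insert.IH[OF mD] T'_def by simp
      have B: "Bn (card X) (rk X) i = Bn (card X') (rk X') j"
        unfolding Bn_def using nX rX Suc by simp
      have cd: "condc X rk i \<longleftrightarrow> condc X' rk j"
        unfolding condc_def using circ rX Suc by simp
      show ?thesis using IH B cd c0 by simp
    qed
  next
    case gen
    define rkC where "rkC = (\<lambda>A. rk (insert e A) - 1)"
    have mC: "matroid_rank X' rkC" unfolding rkC_def
      by (rule contr_matroid) (use insert.prems insert.hyps gen in auto)
    have ge: "rk (insert e A) \<ge> 1" if "A \<subseteq> X'" for A
      using mr_mono[OF m, of "{e}" "insert e A"] that eX gen by auto
    have rC: "rkC X' = rk X - 1" unfolding rkC_def X_def ..
    have T: "tutte_poly_x X rk 1 = tutte_poly_x X' rk 1 + tutte_poly_x X' rkC 1"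
    proof -
      have s2: "(\<Sum>A\<in>Pow X'. [:-1,1:]^(rk X - rk (insert e A)) * [:(1-1::real)^(card (insert e A) - rk (insert e A)):])
          = tutte_poly_x X' rkC 1"
        unfolding tutte_poly_x_def
      proof (rule sum.cong[OF refl])
        fix A assume A: "A \<in> Pow X'"
        have g: "rk (insert e A) \<ge> 1" using ge A by simp
        have l: "rk (insert e A) \<le> Suc (card A)" using mr_card[OF m, of "insert e A"] A eX cardins by auto
        have "rk X - rk (insert e A) = rkC X' - rkC A" using g rC unfolding rkC_def by simp
        moreover have "card (insert e A) - rk (insert e A) = card A - rkC A" using g l A cardins unfolding rkC_def by simp
        ultimately show "[:-1,1:]^(rk X - rk (insert e A)) * [:(1-1::real)^(card (insert e A) - rk (insert e A)):] =
          [:-1,1:]^(rkC X' - rkC A) * [:(1-1::real)^(card A - rkC A):]" by simp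
      qed
      show ?thesis using split s2 TD gen by simp
    qed
    have IHD: "coeff (tutte_poly_x X' rk 1) i \<le> Bn (card X') (rk X') i \<and>
      (coeff (tutte_poly_x X' rk 1) i = Bn (card X') (rk X') i \<longleftrightarrow> condc X' rk i)"
      using insert.IH[OF mD] .
    have IHC: "coeff (tutte_poly_x X' rkC 1) i \<le> Bn (card X') (rkC X') i \<and>
      (coeff (tutte_poly_x X' rkC 1) i = Bn (card X') (rkC X') i \<longleftrightarrow> condc X' rkC i)"
      using insert.IH[OF mC] .
    have r1: "rk X \<ge> 1" using mr_mono[OF m, of "{e}" X] eX gen by simp
    have p: "Bn (card X) (rk X) i = Bn (card X') (rk X) i + Bn (card X') (rk X - 1) i"
      using Bn_pascal[of "card X" "rk X" i] nX r1 by simp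
    have finX: "finite X" using mr_finite[OF m] .
    have ca: "\<exists>C. circuit X rk C \<and> card C \<le> card C' + 1" if c': "circuit X' rkC C'" for C'
    proof -
      have sub: "C' \<subseteq> X'" using c' unfolding circuit_def by simp
      have g: "rk (insert e C') \<ge> 1" using ge sub by simp
      have "rk (insert e C') = card C'" using c' g unfolding circuit_def rkC_def by auto
      moreover have ci: "card (insert e C') = Suc (card C')" using cardins sub by simp
      ultimately have "rk (insert e C') < card (insert e C')" by simp
      then obtain C where "C \<subseteq> insert e C'" "circuit X rk C"
        using dep_circuit[OF m, of "insert e C'"] sub eX by auto
      moreover then have "card C \<le> card (insert e C')"
        using finX sub eX by (meson card_mono finite_insert finite_subset insert_subset)
      ultimately show ?thesis using ci by auto
    qed
    have cb: "\<exists>C'. circuit X' rkC C' \<and> card C' + 1 \<le> card C" if c: "circuit X rk C" "e \<in> C" for C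
    proof -
      have "C \<subseteq> X" using c(1) unfolding circuit_def by blast
      then have sub: "C - {e} \<subseteq> X'" using X_def by blast
      have ins: "insert e (C - {e}) = C" using c by auto
      have fC: "finite C" using circuit_fin[OF m c(1)] .
      have cc: "card C = rk C + 1" using circuit_card[OF c(1)] .
      have "C \<noteq> {e}"
      proof
        assume "C = {e}"
        then have "int (rk {e}) = int (card {e}) - 1" using c(1) unfolding circuit_def by blast
        then show False using gen by simp
      qed
      have "card C \<noteq> 1"
      proof
        assume "card C = 1"
        then obtain x where "C = {x}" by (rule card_1_singletonE)
        then have "C = {e}" using c(2) by simp
        then show False using \<open>C \<noteq> {e}\<close> by simp
      qed
      then have "card C \<ge> 2" using cc by simp
      have cd: "card (C - {e}) = card C - 1" using c fC by simp
      have "rkC (C - {e}) = rk C - 1" unfolding rkC_def ins ..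
      then have "rkC (C - {e}) < card (C - {e})" using cc cd \<open>card C \<ge> 2\<close> by simp
      then obtain C' where "C' \<subseteq> C - {e}" "circuit X' rkC C'"
        using dep_circuit[OF mC, of "C - {e}"] sub by auto
      moreover then have "card C' \<le> card (C - {e})" using fC by (meson card_mono finite_Diff)
      ultimately show ?thesis using cd \<open>card C \<ge> 2\<close> by auto
    qed
    have cond: "condc X rk i \<longleftrightarrow> condc X' rk i \<and> condc X' rkC i"
    proof
      assume cd: "condc X rk i"
      have "condc X' rk i" unfolding condc_def
      proof (intro allI impI)
        fix C assume "circuit X' rk C"
        then have "circuit X rk C" using circuit_sub eX by blast
        then show "rk X' - i < card C" using cd gen unfolding condc_def by simp
      qed
      moreover have "condc X' rkC i" unfolding condc_def
      proof (intro allI impI)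
        fix C' assume c': "circuit X' rkC C'"
        obtain C where "circuit X rk C" "card C \<le> card C' + 1" using ca[OF c'] by blast
        moreover have "card C' \<ge> 1" using circuit_card[OF c'] by simp
        moreover have "rk X - i < card C" using cd \<open>circuit X rk C\<close> unfolding condc_def by blast
        ultimately show "rkC X' - i < card C'" using rC by simp
      qed
      ultimately show "condc X' rk i \<and> condc X' rkC i" by simp
    next
      assume cd: "condc X' rk i \<and> condc X' rkC i"
      show "condc X rk i" unfolding condc_def
      proof (intro allI impI)
        fix C assume c: "circuit X rk C"
        show "rk X - i < card C"
        proof (cases "e \<in> C")
          case False
          moreover have "C \<subseteq> X" using c unfolding circuit_def by blast
          ultimately have "C \<subseteq> X'" using X_def by blast
          then have "circuit X' rk C" by (rule circuit_res[OF c])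
          then show ?thesis using cd gen unfolding condc_def by simp
        next
          case True
          obtain C' where "circuit X' rkC C'" "card C' + 1 \<le> card C" using cb[OF c True] by blast
          moreover have "rkC X' - i < card C'" using cd \<open>circuit X' rkC C'\<close> unfolding condc_def by blast
          ultimately show ?thesis using rC by simp
        qed
      qed
    qed
    have cT: "coeff (tutte_poly_x X rk 1) i = coeff (tutte_poly_x X' rk 1) i + coeff (tutte_poly_x X' rkC 1) i"
      using T by simp
    show ?thesis using IHD IHC cT p cond gen(2) rC by auto
  qed
  then show ?case unfolding X_def .
qed


theorem theorem3p5:
  fixes X :: "'a set" and rk :: "'a set \<Rightarrow> nat" and i :: nat
  assumes "matroid_rank X rk"
  shows "(int (rk X) - int i < 0 \<or> enat (rk X - i) < d1 X rk)
     \<longleftrightarrow> coeff (tutte_poly_x X rk 1) i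
           = int_binom (int (card X) - int i - 1) (int (rk X) - int i)"
proof -
  have M: "coeff (tutte_poly_x X rk 1) i = Bn (card X) (rk X) i \<longleftrightarrow> condc X rk i"
    using main[OF mr_finite[OF assms] assms] by blast
  have B: "enat (rk X - i) < d1 X rk \<longleftrightarrow> condc X rk i"
    unfolding d1_def condc_def Inf_enat_less by auto
  have A: "int (rk X) - int i < 0 \<Longrightarrow> condc X rk i"
    unfolding condc_def using circuit_card by fastforce
  show ?thesis using M A B unfolding Bn_def by blast
qed

end
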